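(* Let $G$ be a graph and let $L$ be a set of specified leaks on $V(G)$ with $I(L)=1$. Then a set $B\subseteq V(G)$ is an $L$-leaky forcing set of $G$ if and only if $B$ is a specified $1$-leaky forcing set of $G$.
   Context: All graphs are finite, simple and undirected. Zero forcing: a blue vertex $u$ with exactly one white neighbor $w$ may force $w$ (color it blue), written $u\to w$. A specified leak on $V(G)$ is an ordered pair $x\to y$ of vertices, meaning $x$ (the tail) is prohibited from forcing $y$ (the head). For a set $L$ of specified leaks, $T(L)$ and $H(L)$ denote its sets of tails and heads. $B$ is a specified $\ell$-leaky forcing set if for every set of at most $\ell$ specified leaks, exhaustively applying the forcing rule from initial blue set $B$ without performing prohibited forces colors all of $V(G)$ blue. Two sets $L_1,L_2$ of specified leaks on $V(G)$ are isomorphic if there is a bijection $\phi:V(G)\to V(G)$ with $x\to y\in L_1$ iff $\phi(x)\to\phi(y)\in L_2$. $B$ is an $L$-leaky forcing set if $B$ colors all of $G$ blue despite any set $L_1$ of specified leaks isomorphic to some subset $L_2\subseteq L$. A set $L$ of specified leaks is independent if $|T(L)|=|L|$ and $T(L)\cap H(L)=\varnothing$; $I(L)$ is the maximum size of an independent subset of $L$. *)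

theory Defs
  imports Main
begin

definition simple_graph :: "'a set \<Rightarrow> ('a \<Rightarrow> 'a \<Rightarrow> bool) \<Rightarrow> bool" where
  "simple_graph V E \<longleftrightarrow> finite V \<and> (\<forall>x y. E x y \<longrightarrow> E y x) \<and> (\<forall>x. \<not> E x x)
     \<and> (\<forall>x y. E x y \<longrightarrow> x \<in> V \<and> y \<in> V)"

text \<open>The final blue set obtained by exhaustively applying the forcing rule from B,
  never performing a prohibited force u \<rightarrow> w with (u,w) in the leak set L.\<close>
inductive_set leaky_closure :: "'a set \<Rightarrow> ('a \<Rightarrow> 'a \<Rightarrow> bool) \<Rightarrow> 'a set \<Rightarrow> ('a \<times> 'a) set \<Rightarrow> 'a set"
  for V E B L where
  init: "b \<in> B \<Longrightarrow> b \<in> leaky_closure V E B L"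
| force: "\<lbrakk> u \<in> leaky_closure V E B L; E u w; (u, w) \<notin> L;
            \<forall>x. E u x \<and> x \<noteq> w \<longrightarrow> x \<in> leaky_closure V E B L \<rbrakk>
          \<Longrightarrow> w \<in> leaky_closure V E B L"

definition forces_all :: "'a set \<Rightarrow> ('a \<Rightarrow> 'a \<Rightarrow> bool) \<Rightarrow> 'a set \<Rightarrow> ('a \<times> 'a) set \<Rightarrow> bool" where
  "forces_all V E B L \<longleftrightarrow> leaky_closure V E B L = V"

definition specified_leaky_forcing :: "'a set \<Rightarrow> ('a \<Rightarrow> 'a \<Rightarrow> bool) \<Rightarrow> nat \<Rightarrow> 'a set \<Rightarrow> bool" where
  "specified_leaky_forcing V E l B \<longleftrightarrow>
     (\<forall>L. L \<subseteq> V \<times> V \<and> card L \<le> l \<longrightarrow> forces_all V E B L)"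

definition tails :: "('a \<times> 'a) set \<Rightarrow> 'a set" where "tails L = fst ` L"
definition heads :: "('a \<times> 'a) set \<Rightarrow> 'a set" where "heads L = snd ` L"

definition leaks_iso :: "'a set \<Rightarrow> ('a \<times> 'a) set \<Rightarrow> ('a \<times> 'a) set \<Rightarrow> bool" where
  "leaks_iso V L1 L2 \<longleftrightarrow> (\<exists>\<phi>. bij_betw \<phi> V V \<and>
      (\<forall>x\<in>V. \<forall>y\<in>V. (x, y) \<in> L1 \<longleftrightarrow> (\<phi> x, \<phi> y) \<in> L2))"

definition L_leaky_forcing :: "'a set \<Rightarrow> ('a \<Rightarrow> 'a \<Rightarrow> bool) \<Rightarrow> ('a \<times> 'a) set \<Rightarrow> 'a set \<Rightarrow> bool" where
  "L_leaky_forcing V E L B \<longleftrightarrow>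
     (\<forall>L1. L1 \<subseteq> V \<times> V \<and> (\<exists>L2. L2 \<subseteq> L \<and> leaks_iso V L1 L2) \<longrightarrow> forces_all V E B L1)"

definition independent_leaks :: "('a \<times> 'a) set \<Rightarrow> bool" where
  "independent_leaks L \<longleftrightarrow> card (tails L) = card L \<and> tails L \<inter> heads L = {}"

definition indep_number :: "('a \<times> 'a) set \<Rightarrow> nat" where
  "indep_number L = Max (card ` {L'. L' \<subseteq> L \<and> independent_leaks L'})"

end

theory Submission
  imports Defs
begin

lemma closure_sub_V:
  assumes "simple_graph V E" "B \<subseteq> V"
  shows "leaky_closure V E B L \<subseteq> V"
proof
  fix z assume "z \<in> leaky_closure V E B L"
  then show "z \<in> V"
    by induction (use assms in \<open>auto simp: simple_graph_def\<close>)
qed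

lemma key:
  assumes G: "simple_graph V E" and BV: "B \<subseteq> V"
    and S: "specified_leaky_forcing V E 1 B"
    and L1V: "L1 \<subseteq> V \<times> V"
    and hP: "\<forall>P. P \<subseteq> L1 \<and> independent_leaks P \<longrightarrow> card P \<le> 1"
  shows "forces_all V E B L1"
proof -
  define C where "C = leaky_closure V E B L1"
  define P where "P = {(u,w). (u,w) \<in> L1 \<and> u \<in> C \<and> w \<notin> C \<and> E u w \<and>
                    (\<forall>x. E u x \<and> x \<noteq> w \<longrightarrow> x \<in> C)}"
  have PL: "P \<subseteq> L1" unfolding P_def by auto
  have finV: "finite V" using G by (simp add: simple_graph_def)
  have finP: "finite P" using PL L1V finV
    by (meson finite_SigmaI finite_subset)
  have inj: "inj_on fst P"
  proof (rule inj_onI)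
    fix p q assume p: "p \<in> P" and q: "q \<in> P" and eq: "fst p = fst q"
    obtain u w where pu: "p = (u,w)" by (cases p)
    obtain u' w' where qu: "q = (u',w')" by (cases q)
    have "u = u'" using eq pu qu by simp
    show "p = q"
    proof (rule ccontr)
      assume "p \<noteq> q"
      then have "w \<noteq> w'" using pu qu \<open>u = u'\<close> by simp
      moreover have "E u w'" "w' \<notin> C" using q qu \<open>u = u'\<close> unfolding P_def by auto
      moreover have "\<forall>x. E u x \<and> x \<noteq> w \<longrightarrow> x \<in> C" using p pu unfolding P_def by simp
      ultimately have "w' \<in> C" by blast
      then show False using \<open>w' \<notin> C\<close> by simp
    qed
  qed
  have "independent_leaks P"
    unfolding independent_leaks_def tails_def heads_def
  proof
    show "card (fst ` P) = card P" using inj by (simp add: card_image)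
    show "fst ` P \<inter> snd ` P = {}" unfolding P_def by auto
  qed
  then have cP: "card P \<le> 1" using hP PL by blast
  have PV: "P \<subseteq> V \<times> V" using PL L1V by blast
  have all: "leaky_closure V E B P = V" using S cP PV
    unfolding specified_leaky_forcing_def forces_all_def by blast
  have sub: "leaky_closure V E B P \<subseteq> C"
  proof
    fix z assume "z \<in> leaky_closure V E B P"
    then show "z \<in> C"
    proof induction
      case (init b) then show ?case unfolding C_def by (rule leaky_closure.init)
    next
      case (force u w)
      have uC: "u \<in> C" and Euw: "E u w" and nP: "(u,w) \<notin> P" using force by auto
      have oth: "\<forall>x. E u x \<and> x \<noteq> w \<longrightarrow> x \<in> C" using force(5) by blast
      show ?case
      proof (rule ccontr)
        assume "w \<notin> C"
        then have "(u,w) \<notin> L1" using uC Euw nP oth unfolding P_def by simp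
        have uC': "u \<in> leaky_closure V E B L1" using uC unfolding C_def .
        have oth': "\<forall>x. E u x \<and> x \<noteq> w \<longrightarrow> x \<in> leaky_closure V E B L1"
          using oth unfolding C_def .
        have "w \<in> leaky_closure V E B L1"
          by (rule leaky_closure.force[OF uC' Euw \<open>(u,w) \<notin> L1\<close> oth'])
        then show False using \<open>w \<notin> C\<close> C_def by simp
      qed
    qed
  qed
  have "C \<subseteq> V" unfolding C_def by (rule closure_sub_V[OF G BV])
  then show ?thesis using sub all unfolding forces_all_def C_def by blast
qed

definition sw :: "'a \<Rightarrow> 'a \<Rightarrow> 'a \<Rightarrow> 'a" where
  "sw p q z = (if z = p then q else if z = q then p else z)"

lemma sw_bij: "bij_betw (sw p q) V V" if "p \<in> V" "q \<in> V"
proof -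
  have inv: "sw p q (sw p q z) = z" for z unfolding sw_def by auto
  have "inj (sw p q)" by (metis inv injI)
  moreover have "sw p q ` V = V"
  proof
    show "sw p q ` V \<subseteq> V" using that unfolding sw_def by auto
    show "V \<subseteq> sw p q ` V"
    proof
      fix z assume "z \<in> V"
      then have "sw p q z \<in> V" using that unfolding sw_def by auto
      then show "z \<in> sw p q ` V" using inv by (metis image_eqI)
    qed
  qed
  ultimately show ?thesis by (simp add: bij_betw_def inj_on_def inj_def)
qed

lemma loop_closure:
  assumes G: "simple_graph V E"
  shows "leaky_closure V E B {} \<subseteq> leaky_closure V E B {(x,x)}"
proof
  fix z assume "z \<in> leaky_closure V E B {}"
  then show "z \<in> leaky_closure V E B {(x,x)}"
  proof induction
    case (init b) then show ?case by (rule leaky_closure.init)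
  next
    case (force u w)
    have "u \<noteq> w" using force G by (auto simp: simple_graph_def)
    then have "(u,w) \<notin> {(x,x)}" by auto
    moreover have "\<forall>y. E u y \<and> y \<noteq> w \<longrightarrow> y \<in> leaky_closure V E B {(x,x)}"
      using force by blast
    moreover have "u \<in> leaky_closure V E B {(x,x)}" "E u w" using force by blast+
    ultimately show ?case using leaky_closure.force by metis
  qed
qed

theorem proposition5p2:
  fixes V :: "'a set" and E :: "'a \<Rightarrow> 'a \<Rightarrow> bool"
    and L :: "('a \<times> 'a) set" and B :: "'a set"
  assumes "simple_graph V E"
    and "L \<subseteq> V \<times> V"
    and "indep_number L = 1"
    and "B \<subseteq> V"
  shows "L_leaky_forcing V E L B \<longleftrightarrow> specified_leaky_forcing V E 1 B"
proof -
  have G: "simple_graph V E" and LV: "L \<subseteq> V \<times> V" and BV: "B \<subseteq> V" using assms by auto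
  have finV: "finite V" using G by (simp add: simple_graph_def)
  have finL: "finite L" using LV finV by (meson finite_SigmaI finite_subset)
  define S where "S = card ` {L'. L' \<subseteq> L \<and> independent_leaks L'}"
  have finS: "finite S" unfolding S_def using finL by simp
  have neS: "{} \<in> {L'. L' \<subseteq> L \<and> independent_leaks L'}"
    by (simp add: independent_leaks_def tails_def heads_def)
  have MaxS: "Max S = 1" using assms(3) unfolding indep_number_def S_def by simp
  have le1: "card Q \<le> 1" if "Q \<subseteq> L" "independent_leaks Q" for Q
  proof -
    have "card Q \<in> S" using that unfolding S_def by blast
    then show ?thesis using Max_ge[OF finS] MaxS by metis
  qed
  show ?thesis
  proof
    assume A: "L_leaky_forcing V E L B"
    have e: "forces_all V E B {}"
      using A unfolding L_leaky_forcing_def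
      apply (elim allE[of _ "{}"])
      apply (erule mp)
      apply (rule conjI, simp)
      apply (rule exI[of _ "{}"])
      apply (simp add: leaks_iso_def)
      apply (rule exI[of _ id])
      by simp
    have "S \<noteq> {}" using neS unfolding S_def by blast
    then have "1 \<in> S" using Max_in[OF finS] MaxS by metis
    then obtain L' where L': "L' \<subseteq> L" "independent_leaks L'" "card L' = 1"
      unfolding S_def by auto
    then obtain a b where ab: "L' = {(a,b)}" by (metis card_1_singletonE surj_pair)
    have "a \<noteq> b" using L'(2) ab by (auto simp: independent_leaks_def tails_def heads_def)
    have abV: "a \<in> V" "b \<in> V" using L'(1) ab LV by auto
    show "specified_leaky_forcing V E 1 B"
      unfolding specified_leaky_forcing_def
    proof (intro allI impI)
      fix L1 assume H: "L1 \<subseteq> V \<times> V \<and> card L1 \<le> 1"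
      have finL1: "finite L1" using H finV by (meson finite_SigmaI finite_subset)
      show "forces_all V E B L1"
      proof (cases "L1 = {}")
        case True then show ?thesis using e by simp
      next
        case False
        then have "card L1 = 1" using H finL1 by (simp add: card_gt_0_iff le_antisym Suc_leI)
        then obtain x y where xy: "L1 = {(x,y)}" by (metis card_1_singletonE surj_pair)
        have xyV: "x \<in> V" "y \<in> V" using H xy by auto
        show ?thesis
        proof (cases "x = y")
          case True
          have "V \<subseteq> leaky_closure V E B L1"
            using e loop_closure[OF G, of B x] True xy unfolding forces_all_def by simp
          then show ?thesis using closure_sub_V[OF G BV] unfolding forces_all_def by blast
        next
          case False
          define s1 where "s1 = sw x a"
          define y' where "y' = s1 y"
          define \<phi> where "\<phi> = sw y' b \<circ> s1"
          have b1: "bij_betw s1 V V" unfolding s1_def using sw_bij xyV abV by metis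
          have y'V: "y' \<in> V" using b1 xyV unfolding y'_def bij_betw_def by auto
          have b2: "bij_betw (sw y' b) V V" using sw_bij y'V abV by metis
          have bphi: "bij_betw \<phi> V V" unfolding \<phi>_def using b1 b2 by (rule bij_betw_trans)
          have s1x: "s1 x = a" unfolding s1_def sw_def by simp
          have "y' \<noteq> a" using False b1 xyV s1x unfolding y'_def bij_betw_def inj_on_def by metis
          then have px: "\<phi> x = a" unfolding \<phi>_def using s1x \<open>a \<noteq> b\<close> by (simp add: sw_def)
          have py: "\<phi> y = b" unfolding \<phi>_def y'_def by (simp add: sw_def)
          have injp: "inj_on \<phi> V" using bphi by (simp add: bij_betw_def)
          have iso: "leaks_iso V L1 L'"
            unfolding leaks_iso_def
          proof (intro exI conjI ballI)
            show "bij_betw \<phi> V V" by (rule bphi)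
            fix u v assume "u \<in> V" "v \<in> V"
            then show "((u, v) \<in> L1) = ((\<phi> u, \<phi> v) \<in> L')"
              using xy ab px py injp xyV unfolding inj_on_def by auto
          qed
          show ?thesis using A H iso L'(1) unfolding L_leaky_forcing_def by blast
        qed
      qed
    qed
  next
    assume S1: "specified_leaky_forcing V E 1 B"
    show "L_leaky_forcing V E L B"
      unfolding L_leaky_forcing_def
    proof (intro allI impI)
      fix L1 assume H: "L1 \<subseteq> V \<times> V \<and> (\<exists>L2. L2 \<subseteq> L \<and> leaks_iso V L1 L2)"
      then obtain L2 \<phi> where L2: "L2 \<subseteq> L" and bphi: "bij_betw \<phi> V V"
        and iso: "\<forall>x\<in>V. \<forall>y\<in>V. (x, y) \<in> L1 \<longleftrightarrow> (\<phi> x, \<phi> y) \<in> L2"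
        unfolding leaks_iso_def by blast
      have L1V: "L1 \<subseteq> V \<times> V" using H by simp
      have injp: "inj_on \<phi> V" using bphi by (simp add: bij_betw_def)
      have hP: "\<forall>P. P \<subseteq> L1 \<and> independent_leaks P \<longrightarrow> card P \<le> 1"
      proof (intro allI impI)
        fix P assume P: "P \<subseteq> L1 \<and> independent_leaks P"
        define f where "f = (\<lambda>p. (\<phi> (fst p), \<phi> (snd p)))"
        have PV: "P \<subseteq> V \<times> V" using P L1V by blast
        have tV: "fst ` P \<subseteq> V" "snd ` P \<subseteq> V" using PV by auto
        have injf: "inj_on f P"
        proof (rule inj_onI)
          fix p q assume pq: "p \<in> P" "q \<in> P" "f p = f q"
          have "fst p \<in> V" "fst q \<in> V" "snd p \<in> V" "snd q \<in> V" using pq PV by auto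
          moreover have "\<phi> (fst p) = \<phi> (fst q)" "\<phi> (snd p) = \<phi> (snd q)"
            using pq(3) unfolding f_def by auto
          ultimately have "fst p = fst q" "snd p = snd q" using injp unfolding inj_on_def by blast+
          then show "p = q" by (simp add: prod_eq_iff)
        qed
        have QL: "f ` P \<subseteq> L"
        proof
          fix q assume "q \<in> f ` P"
          then obtain p where p: "p \<in> P" "q = f p" by blast
          then show "q \<in> L" using iso P PV L2 unfolding f_def
            by (metis (no_types, lifting) mem_Sigma_iff prod.collapse subsetD)
        qed
        have tQ: "fst ` (f ` P) = \<phi> ` (fst ` P)" unfolding f_def by (auto simp: image_image)
        have hQ: "snd ` (f ` P) = \<phi> ` (snd ` P)" unfolding f_def by (auto simp: image_image)
        have "independent_leaks (f ` P)"
          unfolding independent_leaks_def tails_def heads_def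
        proof
          have "card (fst ` (f ` P)) = card (fst ` P)"
            using tQ card_image inj_on_subset[OF injp tV(1)] by metis
          also have "\<dots> = card P" using P by (simp add: independent_leaks_def tails_def)
          also have "\<dots> = card (f ` P)" using injf by (simp add: card_image)
          finally show "card (fst ` (f ` P)) = card (f ` P)" .
          have "\<phi> ` (fst ` P) \<inter> \<phi> ` (snd ` P) = \<phi> ` (fst ` P \<inter> snd ` P)"
            using inj_on_image_Int[OF injp tV] by simp
          also have "\<dots> = {}" using P by (simp add: independent_leaks_def tails_def heads_def)
          finally show "fst ` (f ` P) \<inter> snd ` (f ` P) = {}" using tQ hQ by simp
        qed
        then have "card (f ` P) \<le> 1" using le1 QL by blast
        then show "card P \<le> 1" using injf by (simp add: card_image)
      qed
      show "forces_all V E B L1" using key[OF G BV S1 L1V hP] .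
    qed
  qed
qed

end
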